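(* Let $\nu\in\mathbb{N}$ and $p\in(0,1)$, and let $G_\nu,g_\nu$ be the c.d.f. and p.d.f. of Student's $t$-distribution with $\nu$ degrees of freedom. For $k\in\mathbb{N}$ let $h_k^{(1)}$ be the unique real solution $h$ of $\int_{-\infty}^{\infty}G_\nu^k(t+h)g_\nu(t)\,dt=p$. Let $q_p$ be the $p$-th quantile of the $\nu$-Fréchet distribution (c.d.f. $x\mapsto\exp(-x^{-\nu})$ for $x>0$), and let $$\gamma_\nu:=\Bigg[\frac{\Gamma(\frac{\nu+1}{2})}{\nu^{1-\frac{\nu}{2}}\sqrt{\pi}\,\Gamma(\frac{\nu}{2})}\Bigg]^{1/\nu}.$$ Then $h_k^{(1)}\sim\gamma_\nu k^{1/\nu}q_p$ as $k\to\infty$.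
   Context: $a_k\sim b_k$ means $a_k/b_k\to1$ as $k\to\infty$. *)

theory Defs
  imports "HOL-Analysis.Analysis"
begin

definition student_pdf :: "nat \<Rightarrow> real \<Rightarrow> real" where
  "student_pdf \<nu> t =
     Gamma ((real \<nu> + 1) / 2) / (sqrt (real \<nu> * pi) * Gamma (real \<nu> / 2))
     * (1 + t\<^sup>2 / real \<nu>) powr (- (real \<nu> + 1) / 2)"

definition student_cdf :: "nat \<Rightarrow> real \<Rightarrow> real" where
  "student_cdf \<nu> x = (LINT t:{..x}|lborel. student_pdf \<nu> t)"

definition h1 :: "nat \<Rightarrow> real \<Rightarrow> nat \<Rightarrow> real" where
  "h1 \<nu> p k = (THE h. (LINT t|lborel. student_cdf \<nu> (t + h) ^ k * student_pdf \<nu> t) = p)"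

definition frechet_cdf :: "nat \<Rightarrow> real \<Rightarrow> real" where
  "frechet_cdf \<nu> x = (if x > 0 then exp (- (x powr (- real \<nu>))) else 0)"

definition frechet_quantile :: "nat \<Rightarrow> real \<Rightarrow> real" where
  "frechet_quantile \<nu> p = (THE x. x > 0 \<and> frechet_cdf \<nu> x = p)"

definition gamma_nu :: "nat \<Rightarrow> real" where
  "gamma_nu \<nu> = (Gamma ((real \<nu> + 1) / 2) /
      (real \<nu> powr (1 - real \<nu> / 2) * sqrt pi * Gamma (real \<nu> / 2))) powr (1 / real \<nu>)"

end

theory Submission
  imports Defs "HOL-Probability.Distributions" "HOL-Real_Asymp.Real_Asymp"
begin

definition cst :: "nat \<Rightarrow> real" where
  "cst \<nu> = Gamma ((real \<nu> + 1) / 2) / (sqrt (real \<nu> * pi) * Gamma (real \<nu> / 2))"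

lemma cst_pos: "\<nu> \<ge> 1 \<Longrightarrow> cst \<nu> > 0"
  unfolding cst_def by (intro divide_pos_pos mult_pos_pos Gamma_real_pos) auto

lemma pdf_eq: "student_pdf \<nu> t = cst \<nu> * (1 + t\<^sup>2 / real \<nu>) powr (- (real \<nu> + 1) / 2)"
  unfolding student_pdf_def cst_def by simp

lemma base_ge1: "\<nu> \<ge> 1 \<Longrightarrow> 1 + t\<^sup>2 / real \<nu> \<ge> 1"
  by simp

lemma base_pos: "\<nu> \<ge> 1 \<Longrightarrow> 1 + t\<^sup>2 / real \<nu> > 0"
  using base_ge1[of \<nu> t] by linarith

lemma pdf_pos: "\<nu> \<ge> 1 \<Longrightarrow> student_pdf \<nu> t > 0"
  unfolding pdf_eq using cst_pos[of \<nu>]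
  using base_pos[of \<nu> t] by (intro mult_pos_pos) auto

lemma pdf_le: "\<nu> \<ge> 1 \<Longrightarrow> student_pdf \<nu> t \<le> cst \<nu>"
proof -
  assume "\<nu> \<ge> 1"
  have "(1 + t\<^sup>2 / real \<nu>) powr (- (real \<nu> + 1) / 2) \<le> 1"
    using powr_mono[of "- (real \<nu> + 1) / 2" 0 "1 + t\<^sup>2 / real \<nu>"] base_ge1[OF \<open>\<nu> \<ge> 1\<close>, of t] by simp
  thus ?thesis unfolding pdf_eq using cst_pos[OF \<open>\<nu> \<ge> 1\<close>]
    by (simp add: mult_left_le)
qed

lemma pdf_cont: "\<nu> \<ge> 1 \<Longrightarrow> continuous_on UNIV (student_pdf \<nu>)"
proof -
  assume "\<nu> \<ge> 1"
  hence "\<forall>x. 1 + x\<^sup>2 / real \<nu> \<noteq> 0" using base_pos by (metis less_irrefl)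
  hence "continuous_on UNIV (\<lambda>t. cst \<nu> * (1 + t\<^sup>2 / real \<nu>) powr (- (real \<nu> + 1) / 2))"
    using \<open>\<nu> \<ge> 1\<close> by (intro continuous_intros) auto
  moreover have "student_pdf \<nu> = (\<lambda>t. cst \<nu> * (1 + t\<^sup>2 / real \<nu>) powr (- (real \<nu> + 1) / 2))"
    by (rule ext, rule pdf_eq)
  ultimately show ?thesis by simp
qed

lemma pdf_meas[measurable]: "student_pdf \<nu> \<in> borel_measurable borel"
  unfolding pdf_eq[abs_def] by measurable

lemma gamma_scale:
  fixes a b :: real assumes a: "a > 0" and b: "b > 0"
  shows "(\<integral>\<^sup>+y. ennreal (indicator {0..} y * y powr (a - 1) * exp (-(b * y))) \<partial>lborel)
           = ennreal (Gamma a / b powr a)"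
proof -
  define f where "f y = indicator {0..} y * y powr (a - 1) * exp (-(b * y))" for y :: real
  have fnn: "f y \<ge> 0" for y unfolding f_def by (auto simp: indicator_def)
  have "ennreal (Gamma a) = (\<integral>\<^sup>+u. ennreal (indicator {0..} u * u powr (a - 1) / exp u) \<partial>lborel)"
    using Gamma_conv_nn_integral_real[OF a] by simp
  also have "\<dots> = (\<integral>\<^sup>+u. ennreal (b powr (a - 1) * f ((1 / b) * u)) \<partial>lborel)"
  proof (intro nn_integral_cong)
    fix u :: real
    show "ennreal (indicator {0..} u * u powr (a - 1) / exp u) = ennreal (b powr (a - 1) * f ((1 / b) * u))"
    proof (cases "u \<ge> 0")
      case True
      have "b powr (a - 1) * (u / b) powr (a - 1) = u powr (a - 1)"
        using True b by (simp add: powr_divide powr_mult)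
      moreover have "exp (-(b * (u / b))) = inverse (exp u)" using b by (simp add: exp_minus)
      ultimately show ?thesis using True b unfolding f_def
        by (simp add: indicator_def divide_inverse mult_ac)
    next
      case False thus ?thesis using b unfolding f_def by (simp add: indicator_def field_simps)
    qed
  qed
  also have "\<dots> = (\<integral>\<^sup>+x. ennreal (b powr (a - 1) * f x) \<partial>distr lborel borel ((*) (1 / b)))"
    by (subst nn_integral_distr) (auto simp: f_def)
  also have "distr lborel borel ((*) (1 / b)) = density lborel (\<lambda>_. b)"
    using b by (subst lborel_distr_mult) auto
  also have "(\<integral>\<^sup>+x. ennreal (b powr (a - 1) * f x) \<partial>density lborel (\<lambda>_. b))
      = (\<integral>\<^sup>+x. ennreal b * ennreal (b powr (a - 1) * f x) \<partial>lborel)"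
    by (subst nn_integral_density) (auto simp: f_def)
  also have "\<dots> = (\<integral>\<^sup>+x. ennreal (b powr a) * ennreal (f x) \<partial>lborel)"
  proof (intro nn_integral_cong)
    fix x
    have "b * (b powr (a - 1) * f x) = b powr a * f x" using b
      by (simp add: powr_diff field_simps)
    thus "ennreal b * ennreal (b powr (a - 1) * f x) = ennreal (b powr a) * ennreal (f x)"
      using b fnn[of x] by (simp add: ennreal_mult'[symmetric])
  qed
  also have "\<dots> = ennreal (b powr a) * (\<integral>\<^sup>+x. ennreal (f x) \<partial>lborel)"
    by (subst nn_integral_cmult) (auto simp: f_def)
  finally have eq: "ennreal (Gamma a) = ennreal (b powr a) * (\<integral>\<^sup>+x. ennreal (f x) \<partial>lborel)" .
  have bp: "b powr a > 0" using b by simp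
  have "(\<integral>\<^sup>+x. ennreal (f x) \<partial>lborel) = ennreal (inverse (b powr a) * b powr a) * (\<integral>\<^sup>+x. ennreal (f x) \<partial>lborel)"
    using bp by simp
  also have "\<dots> = ennreal (inverse (b powr a)) * (ennreal (b powr a) * (\<integral>\<^sup>+x. ennreal (f x) \<partial>lborel))"
  proof -
    have "ennreal (inverse (b powr a) * b powr a) = ennreal (inverse (b powr a)) * ennreal (b powr a)"
      by (rule ennreal_mult) (use bp in auto)
    thus ?thesis by (simp only: mult.assoc)
  qed
  also have "\<dots> = ennreal (inverse (b powr a)) * ennreal (Gamma a)" using eq by simp
  also have "\<dots> = ennreal (Gamma a / b powr a)"
    using bp Gamma_real_pos[OF a] by (simp add: ennreal_mult'[symmetric] divide_inverse mult.commute)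
  finally show ?thesis unfolding f_def .
qed

lemma gauss_nn:
  fixes y :: real and n :: real assumes y: "y > 0" and n: "n > 0"
  shows "(\<integral>\<^sup>+t. ennreal (exp (-(y * t\<^sup>2 / n))) \<partial>lborel) = ennreal (sqrt (pi * n / y))"
proof -
  define \<sigma> where "\<sigma> = sqrt (n / (2 * y))"
  have sp: "\<sigma> > 0" unfolding \<sigma>_def using y n by simp
  have s2: "\<sigma>\<^sup>2 = n / (2 * y)" unfolding \<sigma>_def using y n by simp
  have eq: "exp (-(y * t\<^sup>2 / n)) = sqrt (pi * n / y) * normal_density 0 \<sigma> t" for t
  proof -
    have "2 * pi * \<sigma>\<^sup>2 = pi * n / y" using s2 y by (simp add: field_simps)
    moreover have "- (t - 0)\<^sup>2 / (2 * \<sigma>\<^sup>2) = -(y * t\<^sup>2 / n)" unfolding s2 using y n by (simp add: field_simps)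
    moreover have "sqrt (pi * n / y) > 0" using y n by simp
    ultimately show ?thesis unfolding normal_density_def using y n by simp
  qed
  have "(\<integral>\<^sup>+t. ennreal (exp (-(y * t\<^sup>2 / n))) \<partial>lborel)
      = (\<integral>\<^sup>+t. ennreal (sqrt (pi * n / y)) * ennreal (normal_density 0 \<sigma> t) \<partial>lborel)"
    using y n by (intro nn_integral_cong) (simp only: eq, rule ennreal_mult, auto)
  also have "\<dots> = ennreal (sqrt (pi * n / y)) * (\<integral>\<^sup>+t. ennreal (normal_density 0 \<sigma> t) \<partial>lborel)"
    by (subst nn_integral_cmult) auto
  also have "(\<integral>\<^sup>+t. ennreal (normal_density 0 \<sigma> t) \<partial>lborel) = ennreal 1"
    using sp by (subst nn_integral_eq_integral) auto
  finally show ?thesis by simp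
qed


lemma pdf_mass:
  assumes nu: "\<nu> \<ge> 1"
  shows "(\<integral>\<^sup>+t. ennreal (student_pdf \<nu> t) \<partial>lborel) = 1"
proof -
  define a where "a = (real \<nu> + 1) / 2"
  have a: "a > 0" unfolding a_def by simp
  have ga: "Gamma a > 0" using Gamma_real_pos[OF a] .
  define C where "C = cst \<nu> / Gamma a"
  have C: "C > 0" unfolding C_def using cst_pos[OF nu] ga by simp
  define F where "F t y = indicator {0..} y * y powr (a - 1) * exp (-((1 + t\<^sup>2 / real \<nu>) * y))"
    for t y :: real
  have Fnn: "F t y \<ge> 0" for t y unfolding F_def by (auto simp: indicator_def)
  have step1: "ennreal (student_pdf \<nu> t) = (\<integral>\<^sup>+y. ennreal (C * F t y) \<partial>lborel)" for t
  proof -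
    define b where "b = 1 + t\<^sup>2 / real \<nu>"
    have b: "b > 0" unfolding b_def using base_pos[OF nu] .
    have "(\<integral>\<^sup>+y. ennreal (C * F t y) \<partial>lborel) = (\<integral>\<^sup>+y. ennreal C * ennreal (F t y) \<partial>lborel)"
      using C Fnn by (intro nn_integral_cong) (simp add: ennreal_mult)
    also have "\<dots> = ennreal C * (\<integral>\<^sup>+y. ennreal (F t y) \<partial>lborel)"
      by (subst nn_integral_cmult) (auto simp: F_def)
    also have "(\<integral>\<^sup>+y. ennreal (F t y) \<partial>lborel) = ennreal (Gamma a / b powr a)"
      unfolding F_def b_def[symmetric] by (rule gamma_scale[OF a b])
    also have "ennreal C * ennreal (Gamma a / b powr a) = ennreal (C * (Gamma a / b powr a))"
      using C ga b by (subst ennreal_mult[symmetric]) auto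
    also have "C * (Gamma a / b powr a) = student_pdf \<nu> t"
    proof -
      have "- (real \<nu> + 1) / 2 = - a" unfolding a_def by (simp add: field_simps)
      hence "(1 + t\<^sup>2 / real \<nu>) powr (- (real \<nu> + 1) / 2) = inverse (b powr a)"
        by (simp only: b_def[symmetric] powr_minus)
      moreover have "C * (Gamma a / b powr a) = cst \<nu> * inverse (b powr a)"
        unfolding C_def using ga by (simp add: field_simps)
      ultimately show ?thesis unfolding pdf_eq by (simp only:)
    qed
    finally show ?thesis ..
  qed
  have step2: "(\<integral>\<^sup>+t. ennreal (C * F t y) \<partial>lborel)
      = ennreal (C * sqrt (pi * real \<nu>) * (indicator {0..} y * y powr (real \<nu> / 2 - 1) * exp (-(1 * y))))" for y
  proof (cases "y > 0")
    case True
    have "(\<integral>\<^sup>+t. ennreal (C * F t y) \<partial>lborel)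
        = (\<integral>\<^sup>+t. ennreal (C * y powr (a - 1) * exp (- y)) * ennreal (exp (-(y * t\<^sup>2 / real \<nu>))) \<partial>lborel)"
    proof (intro nn_integral_cong)
      fix t
      have "F t y = y powr (a - 1) * exp (- y) * exp (-(y * t\<^sup>2 / real \<nu>))"
      proof -
        have "-((1 + t\<^sup>2 / real \<nu>) * y) = -y + -(y * t\<^sup>2 / real \<nu>)" by (simp add: algebra_simps)
        hence "exp (-((1 + t\<^sup>2 / real \<nu>) * y)) = exp (- y) * exp (-(y * t\<^sup>2 / real \<nu>))"
          by (simp only: exp_add)
        thus ?thesis unfolding F_def using True by (simp add: indicator_def mult.assoc)
      qed
      thus "ennreal (C * F t y) = ennreal (C * y powr (a - 1) * exp (- y)) * ennreal (exp (-(y * t\<^sup>2 / real \<nu>)))"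
        using C True by (simp add: ennreal_mult[symmetric] mult.assoc)
    qed
    also have "\<dots> = ennreal (C * y powr (a - 1) * exp (- y)) * (\<integral>\<^sup>+t. ennreal (exp (-(y * t\<^sup>2 / real \<nu>))) \<partial>lborel)"
      by (subst nn_integral_cmult) auto
    also have "\<dots> = ennreal (C * y powr (a - 1) * exp (- y)) * ennreal (sqrt (pi * real \<nu> / y))"
      using True nu by (subst gauss_nn) auto
    also have "\<dots> = ennreal (C * y powr (a - 1) * exp (- y) * sqrt (pi * real \<nu> / y))"
      using C True by (subst ennreal_mult[symmetric]) auto
    also have "C * y powr (a - 1) * exp (- y) * sqrt (pi * real \<nu> / y)
        = C * sqrt (pi * real \<nu>) * (indicator {0..} y * y powr (real \<nu> / 2 - 1) * exp (-(1 * y)))"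
    proof -
      have "sqrt (pi * real \<nu> / y) = sqrt (pi * real \<nu>) / y powr (1/2)"
        using True by (simp add: real_sqrt_divide powr_half_sqrt)
      moreover have "y powr (a - 1) / y powr (1/2) = y powr (real \<nu> / 2 - 1)"
      proof -
        have "a - 1 - 1/2 = real \<nu> / 2 - 1" unfolding a_def by (simp add: field_simps)
        thus ?thesis by (simp only: powr_diff[symmetric])
      qed
      ultimately show ?thesis using True
        by (simp add: indicator_def field_simps)
    qed
    finally show ?thesis .
  next
    case False
    hence z1: "C * F t y = 0" for t
      unfolding F_def by (cases "y = 0") (auto simp: indicator_def)
    have z2: "C * sqrt (pi * real \<nu>) * (indicator {0..} y * y powr (real \<nu> / 2 - 1) * exp (-(1 * y))) = 0"
      using False by (cases "y = 0") (auto simp: indicator_def)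
    show ?thesis unfolding z1 z2 by simp
  qed
  have "(\<integral>\<^sup>+t. ennreal (student_pdf \<nu> t) \<partial>lborel) = (\<integral>\<^sup>+t. \<integral>\<^sup>+y. ennreal (C * F t y) \<partial>lborel \<partial>lborel)"
    using step1 by simp
  also have "\<dots> = (\<integral>\<^sup>+y. \<integral>\<^sup>+t. ennreal (C * F t y) \<partial>lborel \<partial>lborel)"
  proof -
    have "(\<lambda>(t, y). ennreal (C * F t y)) \<in> borel_measurable (lborel \<Otimes>\<^sub>M lborel)"
      unfolding F_def by measurable
    from lborel_pair.Fubini'[OF this] show ?thesis by simp
  qed
  also have "\<dots> = (\<integral>\<^sup>+y. ennreal (C * sqrt (pi * real \<nu>)) * ennreal (indicator {0..} y * y powr (real \<nu> / 2 - 1) * exp (-(1 * y))) \<partial>lborel)"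
    unfolding step2 using C
    by (intro nn_integral_cong) (auto simp: ennreal_mult indicator_def)
  also have "\<dots> = ennreal (C * sqrt (pi * real \<nu>)) * ennreal (Gamma (real \<nu> / 2) / 1 powr (real \<nu> / 2))"
    using nu gamma_scale[of "real \<nu> / 2" 1] by (subst nn_integral_cmult) auto
  also have "\<dots> = ennreal (C * sqrt (pi * real \<nu>) * Gamma (real \<nu> / 2))"
    using C nu Gamma_real_pos[of "real \<nu> / 2"] by (subst ennreal_mult[symmetric]) auto
  also have "C * sqrt (pi * real \<nu>) * Gamma (real \<nu> / 2) = 1"
  proof -
    have g1: "Gamma (real \<nu> / 2) > 0" using nu by (intro Gamma_real_pos) auto
    have s1: "sqrt (real \<nu> * pi) > 0" using nu by simp
    have "sqrt (pi * real \<nu>) = sqrt (real \<nu> * pi)" by (simp add: mult.commute)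
    moreover have key: "\<And>x y z. x > 0 \<Longrightarrow> y > 0 \<Longrightarrow> z > 0 \<Longrightarrow> x / (y * z) / x * y * z = (1::real)"
      by (simp add: field_simps)
    ultimately show ?thesis unfolding C_def cst_def a_def[symmetric]
      by (simp only:) (rule key[OF ga s1 g1])
  qed
  finally show ?thesis by simp
qed


lemma pdf_integrable: "\<nu> \<ge> 1 \<Longrightarrow> integrable lborel (student_pdf \<nu>)"
proof -
  assume nu: "\<nu> \<ge> 1"
  show ?thesis
    by (rule integrableI_nonneg) (use pdf_mass[OF nu] pdf_pos[OF nu] in \<open>auto intro!: AE_I2 less_imp_le\<close>)
qed

lemma pdf_integral: "\<nu> \<ge> 1 \<Longrightarrow> integral\<^sup>L lborel (student_pdf \<nu>) = 1"
proof -
  assume nu: "\<nu> \<ge> 1"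
  have "ennreal (integral\<^sup>L lborel (student_pdf \<nu>)) = 1"
    using nn_integral_eq_integral[OF pdf_integrable[OF nu]] pdf_mass[OF nu] less_imp_le[OF pdf_pos[OF nu]]
    by simp
  moreover have "integral\<^sup>L lborel (student_pdf \<nu>) \<ge> 0"
    using less_imp_le[OF pdf_pos[OF nu]] by (intro integral_nonneg_AE) auto
  ultimately show ?thesis by simp
qed

lemma pdf_set_integrable: "\<nu> \<ge> 1 \<Longrightarrow> A \<in> sets borel \<Longrightarrow> set_integrable lborel A (student_pdf \<nu>)"
  unfolding set_integrable_def by (intro integrable_mult_indicator pdf_integrable) auto

lemma cdf_tail: "\<nu> \<ge> 1 \<Longrightarrow> student_cdf \<nu> x + (LINT t:{x<..}|lborel. student_pdf \<nu> t) = 1"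
proof -
  assume nu: "\<nu> \<ge> 1"
  have "student_cdf \<nu> x + (LINT t:{x<..}|lborel. student_pdf \<nu> t) = (LINT t:{..x} \<union> {x<..}|lborel. student_pdf \<nu> t)"
    unfolding student_cdf_def by (rule set_integral_Un[symmetric]) (auto intro!: pdf_set_integrable nu)
  also have "{..x} \<union> {x<..} = space lborel" by auto
  also have "(LINT t:space lborel|lborel. student_pdf \<nu> t) = 1"
    by (subst set_integral_space[OF pdf_integrable[OF nu]]) (rule pdf_integral[OF nu])
  finally show ?thesis .
qed

lemma cdf_diff: "\<nu> \<ge> 1 \<Longrightarrow> x \<le> y \<Longrightarrow> student_cdf \<nu> y - student_cdf \<nu> x = (LINT t:{x<..y}|lborel. student_pdf \<nu> t)"
proof -
  assume nu: "\<nu> \<ge> 1" and xy: "x \<le> y"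
  have "student_cdf \<nu> y = (LINT t:{..x} \<union> {x<..y}|lborel. student_pdf \<nu> t)"
    unfolding student_cdf_def using xy by (intro arg_cong[where f="\<lambda>S. set_lebesgue_integral lborel S _"]) auto
  also have "\<dots> = student_cdf \<nu> x + (LINT t:{x<..y}|lborel. student_pdf \<nu> t)"
    unfolding student_cdf_def by (rule set_integral_Un) (auto intro!: pdf_set_integrable nu)
  finally show ?thesis by simp
qed

lemma cdf_lip: "\<nu> \<ge> 1 \<Longrightarrow> x \<le> y \<Longrightarrow> student_cdf \<nu> y - student_cdf \<nu> x \<le> cst \<nu> * (y - x)"
proof -
  assume nu: "\<nu> \<ge> 1" and xy: "x \<le> y"
  have "(LINT t:{x<..y}|lborel. student_pdf \<nu> t) \<le> (LINT t:{x<..y}|lborel. cst \<nu>)"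
    using pdf_le[OF nu] xy by (intro set_integral_mono pdf_set_integrable nu)
      (auto simp: set_integrable_def intro!: integrable_real_indicator)
  also have "\<dots> = cst \<nu> * (y - x)" using xy by (subst set_integral_const) auto
  finally show ?thesis using cdf_diff[OF nu xy] by simp
qed

lemma cdf_mono_strict: "\<nu> \<ge> 1 \<Longrightarrow> x < y \<Longrightarrow> student_cdf \<nu> x < student_cdf \<nu> y"
proof -
  assume nu: "\<nu> \<ge> 1" and xy: "x < y"
  define m where "m = cst \<nu> * (1 + max (x\<^sup>2) (y\<^sup>2) / real \<nu>) powr (- (real \<nu> + 1) / 2)"
  have "max (x\<^sup>2) (y\<^sup>2) / real \<nu> \<ge> 0" by (simp add: le_max_iff_disj)
  hence "1 + max (x\<^sup>2) (y\<^sup>2) / real \<nu> > 0" by linarith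
  hence m: "m > 0" unfolding m_def using cst_pos[OF nu] by (intro mult_pos_pos) auto
  have lb: "m \<le> student_pdf \<nu> t" if "t \<in> {x<..y}" for t
  proof -
    have "\<bar>t\<bar> \<le> \<bar>x\<bar> \<or> \<bar>t\<bar> \<le> \<bar>y\<bar>" using that by auto
    hence "t\<^sup>2 \<le> max (x\<^sup>2) (y\<^sup>2)" by (auto simp: abs_le_square_iff le_max_iff_disj)
    hence "(1 + max (x\<^sup>2) (y\<^sup>2) / real \<nu>) powr (- (real \<nu> + 1) / 2) \<le> (1 + t\<^sup>2 / real \<nu>) powr (- (real \<nu> + 1) / 2)"
      using nu by (intro powr_mono2') (auto intro!: add_pos_nonneg divide_right_mono)
    thus ?thesis unfolding m_def pdf_eq using cst_pos[OF nu] by simp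
  qed
  have "0 < m * (y - x)" using m xy by simp
  also have "m * (y - x) = (LINT t:{x<..y}|lborel. m)" using xy by (subst set_integral_const) auto
  also have "\<dots> \<le> (LINT t:{x<..y}|lborel. student_pdf \<nu> t)"
    using lb xy by (intro set_integral_mono pdf_set_integrable nu)
      (auto simp: set_integrable_def intro!: integrable_real_indicator)
  finally show ?thesis using cdf_diff[OF nu less_imp_le[OF xy]] by simp
qed

lemma cdf_mono: "\<nu> \<ge> 1 \<Longrightarrow> x \<le> y \<Longrightarrow> student_cdf \<nu> x \<le> student_cdf \<nu> y"
  using cdf_mono_strict[of \<nu> x y] by (cases "x = y") auto

lemma tail_nonneg: "\<nu> \<ge> 1 \<Longrightarrow> (LINT t:{x<..}|lborel. student_pdf \<nu> t) \<ge> 0"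
  unfolding set_lebesgue_integral_def using less_imp_le[OF pdf_pos]
  by (intro integral_nonneg_AE) (auto simp: indicator_def)

lemma cdf_nonneg: "\<nu> \<ge> 1 \<Longrightarrow> student_cdf \<nu> x \<ge> 0"
  unfolding student_cdf_def set_lebesgue_integral_def using less_imp_le[OF pdf_pos]
  by (intro integral_nonneg_AE) (auto simp: indicator_def)

lemma cdf_le1: "\<nu> \<ge> 1 \<Longrightarrow> student_cdf \<nu> x \<le> 1"
  using cdf_tail[of \<nu> x] tail_nonneg[of \<nu> x] by linarith

lemma cdf_cont: "\<nu> \<ge> 1 \<Longrightarrow> continuous_on UNIV (student_cdf \<nu>)"
proof -
  assume nu: "\<nu> \<ge> 1"
  have "dist (student_cdf \<nu> y) (student_cdf \<nu> x) \<le> cst \<nu> * dist y x" for x y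
  proof (cases "x \<le> y")
    case True thus ?thesis using cdf_lip[OF nu True] cdf_mono[OF nu True] by (simp add: dist_real_def)
  next
    case False hence yx: "y \<le> x" by simp
    thus ?thesis using cdf_lip[OF nu yx] cdf_mono[OF nu yx] by (simp add: dist_real_def)
  qed
  thus ?thesis using cst_pos[OF nu]
    by (intro lipschitz_on_continuous_on[where L="cst \<nu>"] lipschitz_onI) auto
qed


lemma powr_tail:
  fixes x e :: real assumes x: "x > 0" and e: "e < -1"
  shows "set_integrable lborel {x<..} (\<lambda>t. t powr e)"
    and "(LINT t:{x<..}|lborel. t powr e) = -(x powr (e+1)) / (e+1)"
proof -
  define V where "V = -(x powr (e+1)) / (e+1)"
  have V: "V \<ge> 0" unfolding V_def using e by (intro divide_nonpos_neg) auto
  have "(\<integral>\<^sup>+t. ennreal (indicator {x..} t * t powr e) \<partial>lborel) = ennreal V"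
    unfolding V_def by (rule nn_integral_has_integral_lebesgue) (use has_integral_powr_to_inf[OF e x] in auto)
  also have "(\<integral>\<^sup>+t. ennreal (indicator {x..} t * t powr e) \<partial>lborel)
      = (\<integral>\<^sup>+t. ennreal (indicator {x<..} t * t powr e) \<partial>lborel)"
    by (intro nn_integral_cong_AE eventually_mono[OF AE_lborel_singleton[of x]]) (auto simp: indicator_def)
  finally have nn: "(\<integral>\<^sup>+t. ennreal (indicator {x<..} t * t powr e) \<partial>lborel) = ennreal V" .
  have int: "integrable lborel (\<lambda>t. indicator {x<..} t * t powr e)"
    by (rule integrableI_nonneg) (auto simp: nn intro!: AE_I2)
  thus "set_integrable lborel {x<..} (\<lambda>t. t powr e)"
    unfolding set_integrable_def by simp
  have "ennreal (integral\<^sup>L lborel (\<lambda>t. indicator {x<..} t * t powr e)) = ennreal V"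
    using nn_integral_eq_integral[OF int] nn by (simp add: indicator_def)
  moreover have "integral\<^sup>L lborel (\<lambda>t. indicator {x<..} t * t powr e) \<ge> 0"
    by (intro integral_nonneg_AE) (auto simp: indicator_def)
  ultimately have "integral\<^sup>L lborel (\<lambda>t. indicator {x<..} t * t powr e) = V"
    using V by simp
  thus "(LINT t:{x<..}|lborel. t powr e) = -(x powr (e+1)) / (e+1)"
    unfolding set_lebesgue_integral_def V_def by simp
qed


definition tailT :: "nat \<Rightarrow> real \<Rightarrow> real" where
  "tailT \<nu> x = (LINT t:{x<..}|lborel. student_pdf \<nu> t)"

definition Kc :: "nat \<Rightarrow> real" where
  "Kc \<nu> = cst \<nu> * real \<nu> powr ((real \<nu> + 1) / 2)"

lemma pdf_eq2: "student_pdf \<nu> t = cst \<nu> * (1 + t\<^sup>2 / real \<nu>) powr (- ((real \<nu> + 1) / 2))"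
  unfolding pdf_eq by (simp only: minus_divide_left)

lemma P_eq: "\<nu> \<ge> 1 \<Longrightarrow> t > 0 \<Longrightarrow>
  (t\<^sup>2 / real \<nu>) powr (- ((real \<nu> + 1) / 2)) = real \<nu> powr ((real \<nu> + 1) / 2) * t powr (- (real \<nu> + 1))"
proof -
  assume nu: "\<nu> \<ge> 1" and t: "t > 0"
  define b where "b = (real \<nu> + 1) / 2"
  have h1: "(t\<^sup>2 / real \<nu>) powr (- b) = (t\<^sup>2) powr (- b) / real \<nu> powr (- b)"
    by (rule powr_divide)
  have "t\<^sup>2 = t powr 2" using t by (simp add: powr_numeral)
  hence "(t\<^sup>2) powr (- b) = t powr (2 * (- b))" by (simp add: powr_powr)
  also have "2 * (- b) = - (real \<nu> + 1)" unfolding b_def by (simp add: field_simps)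
  finally have h2: "(t\<^sup>2) powr (- b) = t powr (- (real \<nu> + 1))" .
  have h3: "real \<nu> powr (- b) = inverse (real \<nu> powr b)" by (rule powr_minus)
  have "(t\<^sup>2 / real \<nu>) powr (- b) = real \<nu> powr b * t powr (- (real \<nu> + 1))"
    unfolding h1 h2 h3 by (simp add: divide_inverse mult.commute)
  thus ?thesis unfolding b_def .
qed

lemma pdf_upper: "\<nu> \<ge> 1 \<Longrightarrow> t > 0 \<Longrightarrow> student_pdf \<nu> t \<le> Kc \<nu> * t powr (- (real \<nu> + 1))"
proof -
  assume nu: "\<nu> \<ge> 1" and t: "t > 0"
  have "(1 + t\<^sup>2 / real \<nu>) powr (- ((real \<nu> + 1) / 2)) \<le> (t\<^sup>2 / real \<nu>) powr (- ((real \<nu> + 1) / 2))"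
    using nu t by (intro powr_mono2') auto
  hence "cst \<nu> * (1 + t\<^sup>2 / real \<nu>) powr (- ((real \<nu> + 1) / 2)) \<le> cst \<nu> * (t\<^sup>2 / real \<nu>) powr (- ((real \<nu> + 1) / 2))"
    using cst_pos[OF nu] by (intro mult_left_mono) auto
  thus ?thesis unfolding pdf_eq2 Kc_def P_eq[OF nu t] by (simp only: mult.assoc)
qed

lemma pdf_lower: "\<nu> \<ge> 1 \<Longrightarrow> x > 0 \<Longrightarrow> t \<ge> x \<Longrightarrow>
    Kc \<nu> * (1 + real \<nu> / x\<^sup>2) powr (- ((real \<nu> + 1) / 2)) * t powr (- (real \<nu> + 1)) \<le> student_pdf \<nu> t"
proof -
  assume nu: "\<nu> \<ge> 1" and x: "x > 0" and tx: "t \<ge> x"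
  have t: "t > 0" using x tx by simp
  have "1 + t\<^sup>2 / real \<nu> = (t\<^sup>2 / real \<nu>) * (1 + real \<nu> / t\<^sup>2)" using nu t by (simp add: field_simps)
  also have "\<dots> \<le> (t\<^sup>2 / real \<nu>) * (1 + real \<nu> / x\<^sup>2)"
    using nu t x tx by (intro mult_left_mono add_left_mono divide_left_mono power_mono) auto
  finally have le: "1 + t\<^sup>2 / real \<nu> \<le> (t\<^sup>2 / real \<nu>) * (1 + real \<nu> / x\<^sup>2)" .
  have "((t\<^sup>2 / real \<nu>) * (1 + real \<nu> / x\<^sup>2)) powr (- ((real \<nu> + 1) / 2)) \<le> (1 + t\<^sup>2 / real \<nu>) powr (- ((real \<nu> + 1) / 2))"
    using nu le by (intro powr_mono2') (auto intro!: add_pos_nonneg)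
  moreover have "((t\<^sup>2 / real \<nu>) * (1 + real \<nu> / x\<^sup>2)) powr (- ((real \<nu> + 1) / 2))
     = (t\<^sup>2 / real \<nu>) powr (- ((real \<nu> + 1) / 2)) * (1 + real \<nu> / x\<^sup>2) powr (- ((real \<nu> + 1) / 2))"
    using nu t x by (subst powr_mult) (auto intro!: add_pos_nonneg)
  ultimately have "real \<nu> powr ((real \<nu> + 1) / 2) * t powr (- (real \<nu> + 1)) * (1 + real \<nu> / x\<^sup>2) powr (- ((real \<nu> + 1) / 2))
      \<le> (1 + t\<^sup>2 / real \<nu>) powr (- ((real \<nu> + 1) / 2))"
    unfolding P_eq[OF nu t] by simp
  hence "cst \<nu> * (real \<nu> powr ((real \<nu> + 1) / 2) * t powr (- (real \<nu> + 1)) * (1 + real \<nu> / x\<^sup>2) powr (- ((real \<nu> + 1) / 2)))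
      \<le> cst \<nu> * (1 + t\<^sup>2 / real \<nu>) powr (- ((real \<nu> + 1) / 2))"
    using cst_pos[OF nu] by (intro mult_left_mono) auto
  thus ?thesis unfolding pdf_eq2 Kc_def by (simp only: mult_ac)
qed


lemma Kc_pos: "\<nu> \<ge> 1 \<Longrightarrow> Kc \<nu> > 0"
  unfolding Kc_def using cst_pos[of \<nu>] by simp

lemma powr_tail_nu:
  assumes nu: "\<nu> \<ge> 1" and x: "x > 0"
  shows "set_integrable lborel {x<..} (\<lambda>t. t powr (- (real \<nu> + 1)))"
    and "(LINT t:{x<..}|lborel. t powr (- (real \<nu> + 1))) = x powr (- real \<nu>) / real \<nu>"
proof -
  have e: "- (real \<nu> + 1) < -1" using nu by simp
  show "set_integrable lborel {x<..} (\<lambda>t. t powr (- (real \<nu> + 1)))" by (rule powr_tail(1)[OF x e])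
  have "- (real \<nu> + 1) + 1 = - real \<nu>" by simp
  thus "(LINT t:{x<..}|lborel. t powr (- (real \<nu> + 1))) = x powr (- real \<nu>) / real \<nu>"
    unfolding powr_tail(2)[OF x e] by simp
qed

lemma tail_upper:
  assumes nu: "\<nu> \<ge> 1" and x: "x > 0"
  shows "tailT \<nu> x \<le> Kc \<nu> * (x powr (- real \<nu>) / real \<nu>)"
proof -
  have "tailT \<nu> x \<le> (LINT t:{x<..}|lborel. Kc \<nu> * t powr (- (real \<nu> + 1)))"
    unfolding tailT_def using x
    by (intro set_integral_mono pdf_set_integrable nu set_integrable_mult_right powr_tail_nu(1) pdf_upper) auto
  also have "\<dots> = Kc \<nu> * (x powr (- real \<nu>) / real \<nu>)"
    by (simp only: set_integral_mult_right powr_tail_nu(2)[OF nu x])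
  finally show ?thesis .
qed

lemma tail_lower:
  assumes nu: "\<nu> \<ge> 1" and x: "x > 0"
  shows "Kc \<nu> * (1 + real \<nu> / x\<^sup>2) powr (- ((real \<nu> + 1) / 2)) * (x powr (- real \<nu>) / real \<nu>) \<le> tailT \<nu> x"
proof -
  have "Kc \<nu> * (1 + real \<nu> / x\<^sup>2) powr (- ((real \<nu> + 1) / 2)) * (x powr (- real \<nu>) / real \<nu>)
      = (LINT t:{x<..}|lborel. Kc \<nu> * (1 + real \<nu> / x\<^sup>2) powr (- ((real \<nu> + 1) / 2)) * t powr (- (real \<nu> + 1)))"
    by (simp only: set_integral_mult_right powr_tail_nu(2)[OF nu x])
  also have "\<dots> \<le> tailT \<nu> x"
    unfolding tailT_def using x
    by (intro set_integral_mono pdf_set_integrable nu set_integrable_mult_right powr_tail_nu(1) pdf_lower) auto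
  finally show ?thesis .
qed

definition Ac :: "nat \<Rightarrow> real" where "Ac \<nu> = Kc \<nu> / real \<nu>"

lemma tail_asymp:
  assumes nu: "\<nu> \<ge> 1"
  shows "((\<lambda>x. x powr real \<nu> * tailT \<nu> x) \<longlongrightarrow> Ac \<nu>) at_top"
proof (rule tendsto_sandwich[where f = "\<lambda>x. Ac \<nu> * (1 + real \<nu> / x\<^sup>2) powr (- ((real \<nu> + 1) / 2))"
      and h = "\<lambda>x. Ac \<nu>"])
  have pp: "x powr real \<nu> * (x powr (- real \<nu>)) = 1" if "x > 0" for x :: real
    using that by (simp add: powr_minus)
  show "\<forall>\<^sub>F x in at_top. Ac \<nu> * (1 + real \<nu> / x\<^sup>2) powr (- ((real \<nu> + 1) / 2)) \<le> x powr real \<nu> * tailT \<nu> x"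
  proof (rule eventually_mono[OF eventually_gt_at_top[of 0]])
    fix x :: real assume x: "x > 0"
    have "x powr real \<nu> * (Kc \<nu> * (1 + real \<nu> / x\<^sup>2) powr (- ((real \<nu> + 1) / 2)) * (x powr (- real \<nu>) / real \<nu>))
        \<le> x powr real \<nu> * tailT \<nu> x"
      using tail_lower[OF nu x] x by (intro mult_left_mono) auto
    moreover have "x powr real \<nu> * (Kc \<nu> * (1 + real \<nu> / x\<^sup>2) powr (- ((real \<nu> + 1) / 2)) * (x powr (- real \<nu>) / real \<nu>))
        = Ac \<nu> * (1 + real \<nu> / x\<^sup>2) powr (- ((real \<nu> + 1) / 2)) * (x powr real \<nu> * (x powr (- real \<nu>)))"
      unfolding Ac_def by (simp add: field_simps)
    ultimately show "Ac \<nu> * (1 + real \<nu> / x\<^sup>2) powr (- ((real \<nu> + 1) / 2)) \<le> x powr real \<nu> * tailT \<nu> x"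
      using pp[OF x] by simp
  qed
  show "\<forall>\<^sub>F x in at_top. x powr real \<nu> * tailT \<nu> x \<le> Ac \<nu>"
  proof (rule eventually_mono[OF eventually_gt_at_top[of 0]])
    fix x :: real assume x: "x > 0"
    have "x powr real \<nu> * tailT \<nu> x \<le> x powr real \<nu> * (Kc \<nu> * (x powr (- real \<nu>) / real \<nu>))"
      using tail_upper[OF nu x] x by (intro mult_left_mono) auto
    also have "\<dots> = Ac \<nu> * (x powr real \<nu> * (x powr (- real \<nu>)))"
      unfolding Ac_def by (simp add: field_simps)
    finally show "x powr real \<nu> * tailT \<nu> x \<le> Ac \<nu>" using pp[OF x] by simp
  qed
  have "((\<lambda>x::real. (1 + real \<nu> / x\<^sup>2) powr (- ((real \<nu> + 1) / 2))) \<longlongrightarrow> 1) at_top"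
    using nu by real_asymp
  from tendsto_mult[OF tendsto_const[of "Ac \<nu>"] this]
  show "((\<lambda>x. Ac \<nu> * (1 + real \<nu> / x\<^sup>2) powr (- ((real \<nu> + 1) / 2))) \<longlongrightarrow> Ac \<nu>) at_top" by simp
qed (rule tendsto_const)


lemma Ac_pos: "\<nu> \<ge> 1 \<Longrightarrow> Ac \<nu> > 0"
  unfolding Ac_def using Kc_pos[of \<nu>] by simp

lemma gamma_nu_powr: assumes nu: "\<nu> \<ge> 1" shows "gamma_nu \<nu> powr real \<nu> = Ac \<nu>" and "gamma_nu \<nu> > 0"
proof -
  define Q where "Q = Gamma ((real \<nu> + 1) / 2) / (real \<nu> powr (1 - real \<nu> / 2) * sqrt pi * Gamma (real \<nu> / 2))"
  have g1: "Gamma (real \<nu> / 2) > 0" using nu by (intro Gamma_real_pos) auto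
  have g2: "Gamma ((real \<nu> + 1) / 2) > 0" by (intro Gamma_real_pos) auto
  have Q: "Q > 0" unfolding Q_def using g1 g2 nu by (intro divide_pos_pos mult_pos_pos) auto
  have "sqrt (real \<nu> * pi) = real \<nu> powr (1/2) * sqrt pi"
    using nu by (simp add: real_sqrt_mult powr_half_sqrt)
  hence "Ac \<nu> = Gamma ((real \<nu> + 1) / 2) / (sqrt pi * Gamma (real \<nu> / 2))
      * (real \<nu> powr ((real \<nu> + 1) / 2) / (real \<nu> powr (1/2) * real \<nu>))"
    unfolding Ac_def Kc_def cst_def using g1 g2 nu by (simp add: field_simps)
  also have "real \<nu> powr ((real \<nu> + 1) / 2) / (real \<nu> powr (1/2) * real \<nu>) = 1 / real \<nu> powr (1 - real \<nu> / 2)"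
  proof -
    have "(real \<nu> + 1) / 2 = 1/2 + (1 + (real \<nu> / 2 - 1))" by simp
    hence "real \<nu> powr ((real \<nu> + 1) / 2) = real \<nu> powr (1/2) * (real \<nu> powr 1 * real \<nu> powr (real \<nu> / 2 - 1))"
      by (simp only: powr_add)
    hence "real \<nu> powr ((real \<nu> + 1) / 2) = real \<nu> powr (1/2) * (real \<nu> * real \<nu> powr (real \<nu> / 2 - 1))"
      by simp
    moreover have "real \<nu> powr (1 - real \<nu> / 2) * real \<nu> powr (real \<nu> / 2 - 1) = 1"
      using nu by (simp add: powr_add[symmetric])
    ultimately show ?thesis using nu by (simp add: field_simps)
  qed
  finally have "Ac \<nu> = Q" unfolding Q_def by (simp add: field_simps)
  moreover have "gamma_nu \<nu> = Q powr (1 / real \<nu>)" unfolding gamma_nu_def Q_def ..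
  ultimately show "gamma_nu \<nu> powr real \<nu> = Ac \<nu>" "gamma_nu \<nu> > 0"
    using Q nu by (simp_all add: powr_powr)
qed

lemma cdf_tailT: "\<nu> \<ge> 1 \<Longrightarrow> student_cdf \<nu> x = 1 - tailT \<nu> x"
  using cdf_tail[of \<nu> x] unfolding tailT_def by simp

lemma tailT_nonneg: "\<nu> \<ge> 1 \<Longrightarrow> tailT \<nu> x \<ge> 0"
  unfolding tailT_def by (rule tail_nonneg)

lemma cdf_at_top: assumes nu: "\<nu> \<ge> 1" shows "(student_cdf \<nu> \<longlongrightarrow> 1) at_top"
proof (rule tendsto_sandwich[where f = "\<lambda>x. 1 - Kc \<nu> * (x powr (- real \<nu>) / real \<nu>)" and h = "\<lambda>_. 1"])
  show "\<forall>\<^sub>F x in at_top. 1 - Kc \<nu> * (x powr - real \<nu> / real \<nu>) \<le> student_cdf \<nu> x"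
    using tail_upper[OF nu] by (intro eventually_mono[OF eventually_gt_at_top[of 0]]) (auto simp: cdf_tailT[OF nu])
  show "\<forall>\<^sub>F x in at_top. student_cdf \<nu> x \<le> 1"
    by (intro always_eventually allI cdf_le1 nu)
  show "((\<lambda>x. 1 - Kc \<nu> * (x powr - real \<nu> / real \<nu>)) \<longlongrightarrow> 1) at_top"
    using nu by real_asymp
qed (rule tendsto_const)

lemma cdf_at_bot: assumes nu: "\<nu> \<ge> 1" shows "(student_cdf \<nu> \<longlongrightarrow> 0) at_bot"
proof -
  define s where "s r t = indicator {..-r} t *\<^sub>R student_pdf \<nu> t" for r t :: real
  have m1: "(\<lambda>t. 0::real) \<in> borel_measurable lborel" by simp
  have m2: "s r \<in> borel_measurable lborel" for r unfolding s_def by measurable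
  have int: "integrable lborel (student_pdf \<nu>)" by (rule pdf_integrable[OF nu])
  have lim: "AE t in lborel. ((\<lambda>r. s r t) \<longlongrightarrow> 0) at_top"
  proof (rule AE_I2)
    fix t :: real
    have "\<forall>\<^sub>F r in at_top. s r t = 0"
      by (rule eventually_mono[OF eventually_gt_at_top[of "-t"]]) (auto simp: indicator_def s_def)
    thus "((\<lambda>r. s r t) \<longlongrightarrow> 0) at_top"
      by (rule tendsto_eventually)
  qed
  have bound: "\<forall>\<^sub>F r in at_top. AE t in lborel. norm (s r t) \<le> student_pdf \<nu> t"
    using less_imp_le[OF pdf_pos[OF nu]] by (intro always_eventually allI AE_I2) (auto simp: indicator_def s_def)
  have "((\<lambda>r. integral\<^sup>L lborel (s r)) \<longlongrightarrow> integral\<^sup>L lborel (\<lambda>t. 0::real)) at_top"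
    using integral_dominated_convergence_at_top[OF m1 m2 int lim bound] by simp
  hence "((\<lambda>r. student_cdf \<nu> (-r)) \<longlongrightarrow> 0) at_top"
    unfolding student_cdf_def set_lebesgue_integral_def s_def by simp
  thus ?thesis by (simp add: filterlim_at_bot_mirror)
qed


definition Phi :: "nat \<Rightarrow> nat \<Rightarrow> real \<Rightarrow> real" where
  "Phi \<nu> k h = (LINT t|lborel. student_cdf \<nu> (t + h) ^ k * student_pdf \<nu> t)"

lemma cdf_meas: "\<nu> \<ge> 1 \<Longrightarrow> (\<lambda>t. student_cdf \<nu> (t + h)) \<in> borel_measurable borel"
proof -
  assume nu: "\<nu> \<ge> 1"
  have "continuous_on UNIV (\<lambda>t. student_cdf \<nu> (t + h))"
    by (rule continuous_on_compose2[OF cdf_cont[OF nu]]) (auto intro!: continuous_intros)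
  thus ?thesis by (rule borel_measurable_continuous_onI)
qed

lemma integrand_meas: "\<nu> \<ge> 1 \<Longrightarrow> (\<lambda>t. student_cdf \<nu> (t + h) ^ k * student_pdf \<nu> t) \<in> borel_measurable lborel"
  using cdf_meas[of \<nu> h] by simp

lemma integrand_bound: "\<nu> \<ge> 1 \<Longrightarrow> norm (student_cdf \<nu> (t + h) ^ k * student_pdf \<nu> t) \<le> student_pdf \<nu> t"
proof -
  assume nu: "\<nu> \<ge> 1"
  have "0 \<le> student_cdf \<nu> (t + h) ^ k" "student_cdf \<nu> (t + h) ^ k \<le> 1"
    using cdf_nonneg[OF nu] cdf_le1[OF nu] by (auto intro: power_le_one)
  thus ?thesis using less_imp_le[OF pdf_pos[OF nu]]
    by (simp add: abs_mult mult_left_le_one_le)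
qed

lemma integrand_integrable: "\<nu> \<ge> 1 \<Longrightarrow> integrable lborel (\<lambda>t. student_cdf \<nu> (t + h) ^ k * student_pdf \<nu> t)"
proof -
  assume nu: "\<nu> \<ge> 1"
  have "norm (student_cdf \<nu> (t + h) ^ k * student_pdf \<nu> t) \<le> norm (student_pdf \<nu> t)" for t
    using integrand_bound[OF nu, where t=t and h=h and k=k] less_imp_le[OF pdf_pos[OF nu, of t]] by simp
  thus ?thesis
    by (intro Bochner_Integration.integrable_bound[OF pdf_integrable[OF nu] integrand_meas[OF nu]] AE_I2)
qed

lemma pow_lip: "(0::real) \<le> x \<Longrightarrow> x \<le> 1 \<Longrightarrow> 0 \<le> y \<Longrightarrow> y \<le> 1 \<Longrightarrow> \<bar>x ^ k - y ^ k\<bar> \<le> real k * \<bar>x - y\<bar>"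
proof (induction k)
  case 0 thus ?case by simp
next
  case (Suc k)
  have "x ^ Suc k - y ^ Suc k = x * (x ^ k - y ^ k) + y ^ k * (x - y)" by (simp add: algebra_simps)
  hence "\<bar>x ^ Suc k - y ^ Suc k\<bar> \<le> \<bar>x\<bar> * \<bar>x ^ k - y ^ k\<bar> + \<bar>y ^ k\<bar> * \<bar>x - y\<bar>"
    by (metis abs_mult abs_triangle_ineq)
  also have "\<dots> \<le> 1 * (real k * \<bar>x - y\<bar>) + 1 * \<bar>x - y\<bar>"
    using Suc by (intro add_mono mult_mono) (auto simp: power_le_one abs_le_iff)
  finally show ?case by (simp add: algebra_simps)
qed

lemma Phi_lip: "\<nu> \<ge> 1 \<Longrightarrow> \<bar>Phi \<nu> k h - Phi \<nu> k h'\<bar> \<le> real k * cst \<nu> * \<bar>h - h'\<bar>"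
proof -
  assume nu: "\<nu> \<ge> 1"
  have "Phi \<nu> k h - Phi \<nu> k h' = (LINT t|lborel. (student_cdf \<nu> (t + h) ^ k - student_cdf \<nu> (t + h') ^ k) * student_pdf \<nu> t)"
    unfolding Phi_def left_diff_distrib
    by (rule Bochner_Integration.integral_diff[OF integrand_integrable[OF nu] integrand_integrable[OF nu], symmetric])
  also have "\<bar>\<dots>\<bar> \<le> (LINT t|lborel. \<bar>(student_cdf \<nu> (t + h) ^ k - student_cdf \<nu> (t + h') ^ k) * student_pdf \<nu> t\<bar>)"
    by (rule integral_abs_bound)
  also have "\<dots> \<le> (LINT t|lborel. (real k * cst \<nu> * \<bar>h - h'\<bar>) * student_pdf \<nu> t)"
  proof (rule integral_mono)
    show "integrable lborel (\<lambda>t. (real k * cst \<nu> * \<bar>h - h'\<bar>) * student_pdf \<nu> t)"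
      using pdf_integrable[OF nu] by simp
    show "integrable lborel (\<lambda>t. \<bar>(student_cdf \<nu> (t + h) ^ k - student_cdf \<nu> (t + h') ^ k) * student_pdf \<nu> t\<bar>)"
      unfolding left_diff_distrib
      by (intro integrable_abs Bochner_Integration.integrable_diff integrand_integrable nu)
    fix t
    have "\<bar>student_cdf \<nu> (t + h) - student_cdf \<nu> (t + h')\<bar> \<le> cst \<nu> * \<bar>h - h'\<bar>"
    proof (cases "h \<le> h'")
      case True
      thus ?thesis using cdf_lip[OF nu, of "t + h" "t + h'"] cdf_mono[OF nu, of "t + h" "t + h'"] by simp
    next
      case False
      thus ?thesis using cdf_lip[OF nu, of "t + h'" "t + h"] cdf_mono[OF nu, of "t + h'" "t + h"] by simp
    qed
    hence "\<bar>student_cdf \<nu> (t + h) ^ k - student_cdf \<nu> (t + h') ^ k\<bar> \<le> real k * (cst \<nu> * \<bar>h - h'\<bar>)"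
      using pow_lip[of "student_cdf \<nu> (t + h)" "student_cdf \<nu> (t + h')" k] cdf_nonneg[OF nu] cdf_le1[OF nu]
      by (meson mult_left_mono of_nat_0_le_iff order_trans)
    thus "\<bar>(student_cdf \<nu> (t + h) ^ k - student_cdf \<nu> (t + h') ^ k) * student_pdf \<nu> t\<bar>
        \<le> (real k * cst \<nu> * \<bar>h - h'\<bar>) * student_pdf \<nu> t"
    proof -
      have gnn: "0 \<le> student_pdf \<nu> t" using less_imp_le[OF pdf_pos[OF nu]] .
      let ?A = "student_cdf \<nu> (t + h) ^ k - student_cdf \<nu> (t + h') ^ k"
      have "\<bar>?A * student_pdf \<nu> t\<bar> = \<bar>?A\<bar> * student_pdf \<nu> t" using gnn by (simp add: abs_mult)
      also have "\<dots> \<le> (real k * (cst \<nu> * \<bar>h - h'\<bar>)) * student_pdf \<nu> t"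
        by (rule mult_right_mono) fact+
      finally show ?thesis by (simp only: mult.assoc)
    qed
  qed
  also have "\<dots> = real k * cst \<nu> * \<bar>h - h'\<bar>"
    using pdf_integral[OF nu] by simp
  finally show ?thesis .
qed

lemma Phi_cont: "\<nu> \<ge> 1 \<Longrightarrow> continuous_on UNIV (Phi \<nu> k)"
proof -
  assume nu: "\<nu> \<ge> 1"
  have "real k * cst \<nu> \<ge> 0" using cst_pos[OF nu] by simp
  thus ?thesis using Phi_lip[OF nu]
    by (intro lipschitz_on_continuous_on[where L="real k * cst \<nu>"] lipschitz_onI) (auto simp: dist_real_def)
qed

lemma Phi_strict_mono: "\<nu> \<ge> 1 \<Longrightarrow> k \<ge> 1 \<Longrightarrow> h < h' \<Longrightarrow> Phi \<nu> k h < Phi \<nu> k h'"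
proof -
  assume nu: "\<nu> \<ge> 1" and k: "k \<ge> 1" and hh: "h < h'"
  define d where "d t = (student_cdf \<nu> (t + h') ^ k - student_cdf \<nu> (t + h) ^ k) * student_pdf \<nu> t" for t
  have dpos: "d t > 0" for t
  proof -
    have "student_cdf \<nu> (t + h) < student_cdf \<nu> (t + h')" using cdf_mono_strict[OF nu] hh by simp
    hence "student_cdf \<nu> (t + h) ^ k < student_cdf \<nu> (t + h') ^ k"
      using cdf_nonneg[OF nu] k by (intro power_strict_mono) auto
    thus ?thesis unfolding d_def using pdf_pos[OF nu] by simp
  qed
  have dint: "integrable lborel d" unfolding d_def left_diff_distrib
    by (rule Bochner_Integration.integrable_diff[OF integrand_integrable[OF nu] integrand_integrable[OF nu]])
  have "Phi \<nu> k h' - Phi \<nu> k h = integral\<^sup>L lborel d"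
    unfolding Phi_def d_def left_diff_distrib
    by (rule Bochner_Integration.integral_diff[OF integrand_integrable[OF nu] integrand_integrable[OF nu], symmetric])
  moreover have "integral\<^sup>L lborel d \<ge> 0" using dpos by (intro integral_nonneg_AE) (auto intro: less_imp_le)
  moreover have "integral\<^sup>L lborel d \<noteq> 0"
  proof
    assume "integral\<^sup>L lborel d = 0"
    hence "AE t in lborel. d t = 0" using integral_nonneg_eq_0_iff_AE[OF dint] dpos by (auto intro: less_imp_le)
    moreover have "AE t in lborel. d t = 0 \<longrightarrow> False"
      using dpos by (intro AE_I2) (metis less_irrefl)
    ultimately have "AE (t::real) in lborel. False" by (rule AE_mp)
    thus False using ae_filter_eq_bot_iff[of "lborel::real measure"] by (simp add: eventually_False)
  qed
  ultimately show ?thesis by linarith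
qed


lemma Phi_at_top: assumes nu: "\<nu> \<ge> 1" shows "(Phi \<nu> k \<longlongrightarrow> 1) at_top"
proof -
  define s where "s h t = student_cdf \<nu> (t + h) ^ k * student_pdf \<nu> t" for h t :: real
  have m1: "student_pdf \<nu> \<in> borel_measurable lborel" by simp
  have m2: "s h \<in> borel_measurable lborel" for h unfolding s_def by (rule integrand_meas[OF nu])
  have int: "integrable lborel (student_pdf \<nu>)" by (rule pdf_integrable[OF nu])
  have lim: "AE t in lborel. ((\<lambda>h. s h t) \<longlongrightarrow> student_pdf \<nu> t) at_top"
  proof (rule AE_I2)
    fix t :: real
    have "filterlim (\<lambda>h. t + h) at_top at_top" by real_asymp
    from filterlim_compose[OF cdf_at_top[OF nu] this]
    have "((\<lambda>h. student_cdf \<nu> (t + h)) \<longlongrightarrow> 1) at_top" .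
    from tendsto_mult[OF tendsto_power[OF this, of k] tendsto_const[of "student_pdf \<nu> t"]]
    show "((\<lambda>h. s h t) \<longlongrightarrow> student_pdf \<nu> t) at_top" unfolding s_def by simp
  qed
  have bound: "\<forall>\<^sub>F h in at_top. AE t in lborel. norm (s h t) \<le> student_pdf \<nu> t"
    unfolding s_def by (intro always_eventually allI AE_I2 integrand_bound nu)
  have "((\<lambda>h. integral\<^sup>L lborel (s h)) \<longlongrightarrow> integral\<^sup>L lborel (student_pdf \<nu>)) at_top"
    using integral_dominated_convergence_at_top[OF m1 m2 int lim bound] by simp
  thus ?thesis unfolding s_def Phi_def[abs_def] pdf_integral[OF nu] by simp
qed

lemma Phi_at_bot: assumes nu: "\<nu> \<ge> 1" and k: "k \<ge> 1" shows "(Phi \<nu> k \<longlongrightarrow> 0) at_bot"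
proof -
  define s where "s h t = student_cdf \<nu> (t + - h) ^ k * student_pdf \<nu> t" for h t :: real
  have m1: "(\<lambda>t. 0::real) \<in> borel_measurable lborel" by simp
  have m2: "s h \<in> borel_measurable lborel" for h unfolding s_def by (rule integrand_meas[OF nu])
  have int: "integrable lborel (student_pdf \<nu>)" by (rule pdf_integrable[OF nu])
  have lim: "AE t in lborel. ((\<lambda>h. s h t) \<longlongrightarrow> 0) at_top"
  proof (rule AE_I2)
    fix t :: real
    have "filterlim (\<lambda>h. t + - h) at_bot at_top" by real_asymp
    from filterlim_compose[OF cdf_at_bot[OF nu] this]
    have "((\<lambda>h. student_cdf \<nu> (t + - h)) \<longlongrightarrow> 0) at_top" .
    from tendsto_mult[OF tendsto_power[OF this, of k] tendsto_const[of "student_pdf \<nu> t"]]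
    moreover have "(0::real) ^ k = 0" using k by (simp add: power_0_left)
    ultimately show "((\<lambda>h. s h t) \<longlongrightarrow> 0) at_top" unfolding s_def by simp
  qed
  have bound: "\<forall>\<^sub>F h in at_top. AE t in lborel. norm (s h t) \<le> student_pdf \<nu> t"
    unfolding s_def by (intro always_eventually allI AE_I2 integrand_bound nu)
  have "((\<lambda>h. integral\<^sup>L lborel (s h)) \<longlongrightarrow> integral\<^sup>L lborel (\<lambda>t. 0::real)) at_top"
    using integral_dominated_convergence_at_top[OF m1 m2 int lim bound] by simp
  hence "((\<lambda>h. Phi \<nu> k (- h)) \<longlongrightarrow> 0) at_top" unfolding s_def Phi_def[abs_def] by simp
  thus ?thesis by (simp add: filterlim_at_bot_mirror)
qed

lemma h1_char:
  assumes nu: "\<nu> \<ge> 1" and k: "k \<ge> 1" and p: "0 < p" "p < 1"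
  shows "Phi \<nu> k (h1 \<nu> p k) = p"
proof -
  have "\<forall>\<^sub>F h in at_top. Phi \<nu> k h > p" by (rule order_tendstoD(1)[OF Phi_at_top[OF nu] p(2)])
  then obtain b where b: "Phi \<nu> k b > p" unfolding eventually_at_top_linorder by blast
  have "\<forall>\<^sub>F h in at_bot. Phi \<nu> k h < p" by (rule order_tendstoD(2)[OF Phi_at_bot[OF nu k] p(1)])
  then obtain a where a: "Phi \<nu> k a < p" unfolding eventually_at_bot_linorder by blast
  have ab: "a \<le> b"
  proof (rule ccontr)
    assume "\<not> a \<le> b" hence "b < a" by simp
    from Phi_strict_mono[OF nu k this] a b show False by simp
  qed
  have cont: "continuous_on {a..b} (Phi \<nu> k)" by (rule continuous_on_subset[OF Phi_cont[OF nu]]) simp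
  from IVT'[OF less_imp_le[OF a] less_imp_le[OF b] ab cont]
  obtain x where x: "Phi \<nu> k x = p" by blast
  have uniq: "h = x" if "Phi \<nu> k h = p" for h
  proof (rule ccontr)
    assume "h \<noteq> x"
    hence "h < x \<or> x < h" by linarith
    thus False
    proof
      assume "h < x" thus False using Phi_strict_mono[OF nu k, of h x] that x by simp
    next
      assume "x < h" thus False using Phi_strict_mono[OF nu k, of x h] that x by simp
    qed
  qed
  have "h1 \<nu> p k = x" unfolding h1_def
  proof (rule the_equality)
    show "(LINT t|lborel. student_cdf \<nu> (t + x) ^ k * student_pdf \<nu> t) = p" using x unfolding Phi_def .
    fix h assume "(LINT t|lborel. student_cdf \<nu> (t + h) ^ k * student_pdf \<nu> t) = p"
    thus "h = x" using uniq unfolding Phi_def by blast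
  qed
  thus ?thesis using x by simp
qed


lemma exp_lim:
  fixes u :: "nat \<Rightarrow> real"
  assumes lim: "(\<lambda>k. real k * u k) \<longlonglongrightarrow> L"
    and ev: "eventually (\<lambda>k. 0 \<le> u k \<and> u k < 1) sequentially"
  shows "(\<lambda>k. (1 - u k) ^ k) \<longlonglongrightarrow> exp (- L)"
proof -
  have inv: "(\<lambda>k. 1 / real k) \<longlonglongrightarrow> 0" by real_asymp
  have "(\<lambda>k. real k * u k * (1 / real k)) \<longlonglongrightarrow> L * 0" by (rule tendsto_mult[OF lim inv])
  moreover have "eventually (\<lambda>k. real k * u k * (1 / real k) = u k) sequentially"
    by (rule eventually_mono[OF eventually_gt_at_top[of 0]]) simp
  ultimately have u0: "u \<longlonglongrightarrow> 0" using tendsto_cong by fastforce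
  have ev2: "eventually (\<lambda>k. - (real k * u k) / (1 - u k) \<le> real k * ln (1 - u k) \<and>
                          real k * ln (1 - u k) \<le> - (real k * u k)) sequentially"
  proof (rule eventually_mono[OF ev])
    fix k assume uk: "0 \<le> u k \<and> u k < 1"
    have pos: "1 - u k > 0" using uk by simp
    have up: "ln (1 - u k) \<le> - u k" using ln_le_minus_one[OF pos] by simp
    have "ln (1 / (1 - u k)) \<le> 1 / (1 - u k) - 1" using pos by (intro ln_le_minus_one) simp
    moreover have "ln (1 / (1 - u k)) = - ln (1 - u k)" using pos by (simp add: ln_div)
    moreover have "1 / (1 - u k) - 1 = u k / (1 - u k)" using pos by (simp add: field_simps)
    ultimately have lo: "- (u k / (1 - u k)) \<le> ln (1 - u k)" by linarith
    have "real k * (- (u k / (1 - u k))) \<le> real k * ln (1 - u k)" by (rule mult_left_mono[OF lo]) simp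
    moreover have "real k * ln (1 - u k) \<le> real k * (- u k)" by (rule mult_left_mono[OF up]) simp
    ultimately show "- (real k * u k) / (1 - u k) \<le> real k * ln (1 - u k) \<and> real k * ln (1 - u k) \<le> - (real k * u k)"
      by simp
  qed
  have l1: "(\<lambda>k. - (real k * u k) / (1 - u k)) \<longlonglongrightarrow> - L / (1 - 0)"
    by (intro tendsto_divide tendsto_minus lim tendsto_diff tendsto_const u0) simp
  have eq: "- L / (1 - 0) = - L" by simp
  have l2: "(\<lambda>k. - (real k * u k)) \<longlonglongrightarrow> - L" by (intro tendsto_minus lim)
  have e1: "eventually (\<lambda>k. - (real k * u k) / (1 - u k) \<le> real k * ln (1 - u k)) sequentially"
    by (rule eventually_mono[OF ev2]) (rule conjunct1)
  have e2: "eventually (\<lambda>k. real k * ln (1 - u k) \<le> - (real k * u k)) sequentially"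
    by (rule eventually_mono[OF ev2]) (rule conjunct2)
  have "(\<lambda>k. real k * ln (1 - u k)) \<longlonglongrightarrow> - L"
    by (rule tendsto_sandwich[OF e1 e2 l1[unfolded eq] l2])
  hence "(\<lambda>k. exp (real k * ln (1 - u k))) \<longlonglongrightarrow> exp (- L)" by (rule tendsto_exp)
  moreover have "eventually (\<lambda>k. exp (real k * ln (1 - u k)) = (1 - u k) ^ k) sequentially"
  proof (rule eventually_mono[OF ev])
    fix k assume uk: "0 \<le> u k \<and> u k < 1"
    hence "exp (ln (1 - u k)) = 1 - u k" by simp
    thus "exp (real k * ln (1 - u k)) = (1 - u k) ^ k" by (simp add: exp_of_nat_mult)
  qed
  ultimately show ?thesis using tendsto_cong by fastforce
qed


lemma yk_lim:
  fixes c t :: real and \<nu> :: nat assumes c: "c > 0" and nu: "\<nu> \<ge> 1"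
  shows "filterlim (\<lambda>k. t + c * real k powr (1 / real \<nu>)) at_top sequentially"
  using c nu by real_asymp

lemma ratio_lim:
  fixes c t :: real and \<nu> :: nat assumes c: "c > 0" and nu: "\<nu> \<ge> 1"
  shows "(\<lambda>k. real k / (t + c * real k powr (1 / real \<nu>)) powr real \<nu>) \<longlonglongrightarrow> 1 / c powr real \<nu>"
  using c nu by real_asymp (simp add: inverse_eq_divide)


lemma cdf_pos: "\<nu> \<ge> 1 \<Longrightarrow> student_cdf \<nu> x > 0"
  using cdf_mono_strict[of \<nu> "x - 1" x] cdf_nonneg[of \<nu> "x - 1"] by simp

lemma pointwise:
  fixes c t :: real assumes c: "c > 0" and nu: "\<nu> \<ge> 1"
  shows "(\<lambda>k. student_cdf \<nu> (t + c * real k powr (1 / real \<nu>)) ^ k) \<longlonglongrightarrow> exp (- (Ac \<nu> * (1 / c powr real \<nu>)))"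
proof -
  define y where "y k = t + c * real k powr (1 / real \<nu>)" for k :: nat
  define u where "u k = tailT \<nu> (y k)" for k
  have ylim: "filterlim y at_top sequentially" unfolding y_def by (rule yk_lim[OF c nu])
  have A1: "(\<lambda>k. y k powr real \<nu> * u k) \<longlonglongrightarrow> Ac \<nu>"
    unfolding u_def using filterlim_compose[OF tail_asymp[OF nu] ylim] by (simp add: o_def)
  have A2: "(\<lambda>k. real k / y k powr real \<nu>) \<longlonglongrightarrow> 1 / c powr real \<nu>"
    unfolding y_def by (rule ratio_lim[OF c nu])
  have "(\<lambda>k. y k powr real \<nu> * u k * (real k / y k powr real \<nu>)) \<longlonglongrightarrow> Ac \<nu> * (1 / c powr real \<nu>)"
    by (rule tendsto_mult[OF A1 A2])
  moreover have "eventually (\<lambda>k. y k > 0) sequentially"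
    using ylim unfolding filterlim_at_top_dense by blast
  hence "eventually (\<lambda>k. y k powr real \<nu> * u k * (real k / y k powr real \<nu>) = real k * u k) sequentially"
    by (rule eventually_mono) simp
  ultimately have lim: "(\<lambda>k. real k * u k) \<longlonglongrightarrow> Ac \<nu> * (1 / c powr real \<nu>)" using tendsto_cong by fastforce
  have ev: "eventually (\<lambda>k. 0 \<le> u k \<and> u k < 1) sequentially"
  proof (rule always_eventually, rule allI)
    fix k
    show "0 \<le> u k \<and> u k < 1" unfolding u_def
      using tailT_nonneg[OF nu, of "y k"] cdf_tailT[OF nu, of "y k"] cdf_pos[OF nu, of "y k"] by simp
  qed
  have "(\<lambda>k. (1 - u k) ^ k) \<longlonglongrightarrow> exp (- (Ac \<nu> * (1 / c powr real \<nu>)))" by (rule exp_lim[OF lim ev])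
  moreover have "1 - u k = student_cdf \<nu> (t + c * real k powr (1 / real \<nu>))" for k
    unfolding u_def y_def using cdf_tailT[OF nu] by simp
  ultimately show ?thesis by simp
qed

lemma Phi_lim:
  fixes c :: real assumes c: "c > 0" and nu: "\<nu> \<ge> 1"
  shows "(\<lambda>k. Phi \<nu> k (c * real k powr (1 / real \<nu>))) \<longlonglongrightarrow> exp (- (Ac \<nu> * (1 / c powr real \<nu>)))"
proof -
  define L where "L = exp (- (Ac \<nu> * (1 / c powr real \<nu>)))"
  define s where "s k t = student_cdf \<nu> (t + c * real k powr (1 / real \<nu>)) ^ k * student_pdf \<nu> t" for k t
  have m1: "(\<lambda>t. L * student_pdf \<nu> t) \<in> borel_measurable lborel" by simp
  have m2: "s k \<in> borel_measurable lborel" for k unfolding s_def by (rule integrand_meas[OF nu])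
  have int: "integrable lborel (student_pdf \<nu>)" by (rule pdf_integrable[OF nu])
  have lim: "AE t in lborel. (\<lambda>k. s k t) \<longlonglongrightarrow> L * student_pdf \<nu> t"
  proof (rule AE_I2)
    fix t
    show "(\<lambda>k. s k t) \<longlonglongrightarrow> L * student_pdf \<nu> t" unfolding s_def L_def
      by (intro tendsto_mult pointwise c nu tendsto_const)
  qed
  have bound: "AE t in lborel. norm (s k t) \<le> student_pdf \<nu> t" for k
    unfolding s_def by (intro AE_I2 integrand_bound nu)
  have "(\<lambda>k. integral\<^sup>L lborel (s k)) \<longlonglongrightarrow> integral\<^sup>L lborel (\<lambda>t. L * student_pdf \<nu> t)"
    by (rule integral_dominated_convergence[OF m1 m2 int lim bound])
  moreover have "integral\<^sup>L lborel (\<lambda>t. L * student_pdf \<nu> t) = L" using pdf_integral[OF nu] by simp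
  moreover have "integral\<^sup>L lborel (s k) = Phi \<nu> k (c * real k powr (1 / real \<nu>))" for k
    unfolding s_def Phi_def ..
  ultimately show ?thesis unfolding L_def by simp
qed


lemma frechet_q:
  assumes nu: "\<nu> \<ge> 1" and p: "0 < p" "p < 1"
  shows "frechet_quantile \<nu> p > 0" and "exp (- (frechet_quantile \<nu> p powr (- real \<nu>))) = p"
proof -
  define q0 where "q0 = (- ln p) powr (- 1 / real \<nu>)"
  have lp: "- ln p > 0" using p by simp
  have q0: "q0 > 0" unfolding q0_def using lp by simp
  have "q0 powr (- real \<nu>) = (- ln p) powr ((- 1 / real \<nu>) * (- real \<nu>))"
    unfolding q0_def by (rule powr_powr)
  also have "(- 1 / real \<nu>) * (- real \<nu>) = 1" using nu by simp
  finally have q0p: "q0 powr (- real \<nu>) = - ln p" using lp by simp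
  have F0: "exp (- (q0 powr (- real \<nu>))) = p" using q0p p by simp
  have uniq: "x = q0" if "x > 0" "exp (- (x powr (- real \<nu>))) = p" for x
  proof -
    have "ln (exp (- (x powr (- real \<nu>)))) = ln p" using that by simp
    hence "x powr (- real \<nu>) = - ln p" by simp
    hence "(x powr (- real \<nu>)) powr (- 1 / real \<nu>) = q0" unfolding q0_def by simp
    moreover have "(x powr (- real \<nu>)) powr (- 1 / real \<nu>) = x powr ((- real \<nu>) * (- 1 / real \<nu>))"
      by (rule powr_powr)
    moreover have "(- real \<nu>) * (- 1 / real \<nu>) = 1" using nu by simp
    ultimately show ?thesis using that by simp
  qed
  have "frechet_quantile \<nu> p = q0" unfolding frechet_quantile_def
  proof (rule the_equality)
    show "q0 > 0 \<and> frechet_cdf \<nu> q0 = p" using q0 F0 unfolding frechet_cdf_def by simp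
    fix x assume "x > 0 \<and> frechet_cdf \<nu> x = p"
    thus "x = q0" using uniq unfolding frechet_cdf_def by auto
  qed
  thus "frechet_quantile \<nu> p > 0" and "exp (- (frechet_quantile \<nu> p powr (- real \<nu>))) = p"
    using q0 F0 by simp_all
qed

lemma F_mono: "\<nu> \<ge> 1 \<Longrightarrow> 0 < x \<Longrightarrow> x < y \<Longrightarrow> exp (- (x powr (- real \<nu>))) < exp (- (y powr (- real \<nu>)))"
  by (simp add: powr_less_mono2_neg)

lemma Phi_lim2:
  assumes nu: "\<nu> \<ge> 1" and x: "x > 0"
  shows "(\<lambda>k. Phi \<nu> k (gamma_nu \<nu> * x * real k powr (1 / real \<nu>))) \<longlonglongrightarrow> exp (- (x powr (- real \<nu>)))"
proof -
  have g: "gamma_nu \<nu> > 0" by (rule gamma_nu_powr(2)[OF nu])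
  have "Ac \<nu> * (1 / (gamma_nu \<nu> * x) powr real \<nu>) = x powr (- real \<nu>)"
  proof -
    have "(gamma_nu \<nu> * x) powr real \<nu> = Ac \<nu> * x powr real \<nu>"
      using g x gamma_nu_powr(1)[OF nu] by (simp add: powr_mult)
    thus ?thesis using Ac_pos[OF nu] x by (simp add: powr_minus divide_inverse)
  qed
  thus ?thesis using Phi_lim[of "gamma_nu \<nu> * x" \<nu>] g x nu by simp
qed

lemma Phi_mono: "\<nu> \<ge> 1 \<Longrightarrow> k \<ge> 1 \<Longrightarrow> a \<le> b \<Longrightarrow> Phi \<nu> k a \<le> Phi \<nu> k b"
  using Phi_strict_mono[of \<nu> k a b] by (cases "a = b") auto

theorem theorem4:
  fixes \<nu> :: nat and p :: real
  assumes "\<nu> \<ge> 1" and "0 < p" and "p < 1"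
  shows "(\<lambda>k. h1 \<nu> p k / (gamma_nu \<nu> * real k powr (1 / real \<nu>) * frechet_quantile \<nu> p))
           \<longlonglongrightarrow> 1"
proof (rule tendstoI)
  note nu = assms(1) and p = assms(2,3)
  fix e :: real assume e: "e > 0"
  define q where "q = frechet_quantile \<nu> p"
  define g where "g = gamma_nu \<nu>"
  have q: "q > 0" "exp (- (q powr (- real \<nu>))) = p" unfolding q_def using frechet_q[OF nu p] by auto
  have g: "g > 0" unfolding g_def by (rule gamma_nu_powr(2)[OF nu])
  define \<epsilon> where "\<epsilon> = min (e / 2) (1 / 2)"
  have \<epsilon>: "\<epsilon> > 0" "\<epsilon> < e" "\<epsilon> \<le> 1/2" unfolding \<epsilon>_def using e by auto
  define xp where "xp = q * (1 + \<epsilon>)"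
  define xm where "xm = q * (1 - \<epsilon>)"
  have xp: "xp > 0" "q < xp" unfolding xp_def using q \<epsilon> by auto
  have xm: "xm > 0" "xm < q" unfolding xm_def using q \<epsilon> by auto
  have Fp: "p < exp (- (xp powr (- real \<nu>)))" using F_mono[OF nu q(1) xp(2)] q(2) by simp
  have Fm: "exp (- (xm powr (- real \<nu>))) < p" using F_mono[OF nu xm] q(2) by simp
  have evp: "eventually (\<lambda>k. p < Phi \<nu> k (g * xp * real k powr (1 / real \<nu>))) sequentially"
    unfolding g_def by (rule order_tendstoD(1)[OF Phi_lim2[OF nu xp(1)] Fp])
  have evm: "eventually (\<lambda>k. Phi \<nu> k (g * xm * real k powr (1 / real \<nu>)) < p) sequentially"
    unfolding g_def by (rule order_tendstoD(2)[OF Phi_lim2[OF nu xm(1)] Fm])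
  have evk: "eventually (\<lambda>k. k \<ge> (1::nat)) sequentially" by (rule eventually_ge_at_top)
  show "eventually (\<lambda>k. dist (h1 \<nu> p k / (gamma_nu \<nu> * real k powr (1 / real \<nu>) * frechet_quantile \<nu> p)) 1 < e) sequentially"
    using evp evm evk
  proof eventually_elim
    case (elim k)
    note k = elim(3)
    define h where "h = h1 \<nu> p k"
    define D where "D = g * real k powr (1 / real \<nu>) * q"
    have D: "D > 0" unfolding D_def using g q k by simp
    have Ph: "Phi \<nu> k h = p" unfolding h_def by (rule h1_char[OF nu k p])
    have up: "h < D * (1 + \<epsilon>)"
    proof (rule ccontr)
      assume "\<not> h < D * (1 + \<epsilon>)"
      hence "g * xp * real k powr (1 / real \<nu>) \<le> h" unfolding D_def xp_def by (simp add: mult_ac)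
      from Phi_mono[OF nu k this] elim(1) Ph show False by simp
    qed
    have lo: "D * (1 - \<epsilon>) < h"
    proof (rule ccontr)
      assume "\<not> D * (1 - \<epsilon>) < h"
      hence "h \<le> g * xm * real k powr (1 / real \<nu>)" unfolding D_def xm_def by (simp add: mult_ac)
      from Phi_mono[OF nu k this] elim(2) Ph show False by simp
    qed
    have "\<bar>h / D - 1\<bar> < \<epsilon>"
    proof -
      have "h / D < 1 + \<epsilon>" using up D by (simp add: divide_less_eq mult.commute)
      moreover have "1 - \<epsilon> < h / D" using lo D by (simp add: less_divide_eq mult.commute)
      ultimately show ?thesis by (simp add: abs_less_iff)
    qed
    thus ?case using \<epsilon> unfolding h_def D_def g_def q_def dist_real_def by simp
  qed
qed

end
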